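(* Consider an instance of $\mathrm{BAL}(\mu,\nu)$. Let $\ell\in\{1,\dots,\nu-1\}$ and $\mathcal S\subseteq\hat V$ with $|\mathcal S|\le k-(\nu-\ell)$, and let $U=\{\tau\subseteq\hat V:|\tau|=\nu-\ell\}$. Then $\tau^*=\arg\max\{\Phi^{\ge\ell}(\mathcal S\cup\tau):\tau\in U\}$ satisfies \[ \Phi^{\ge\ell}(\mathcal S\cup\tau^* )-\Phi^{\ge\ell}(\mathcal S)\ \ge\ \frac{\Phi^{\ge\ell}(\mathcal S^*_{\ge\ell})-\Phi^{\ge\ell}(\mathcal S)}{\binom{k}{\nu-\ell}}, \] where $\mathcal S^*_{\ge\ell}$ is an optimal solution of size $k$ to maximizing $\Phi^{\ge\ell}$.
   Context: Triggering model: for a directed graph $G=(V,E)$ and $p:E\to[0,1]$, an outcome $X=(T_v)_{v\in V}$ is obtained by having each node $v$ independently choose a subset $T_v$ of its in-neighbours $N_v$, with $T_v=S$ with probability $\prod_{u\in S}p_{uv}\prod_{u\in N_v\setminus S}(1-p_{uv})$; $\rho_X(A)$ is the set of nodes reachable from $A\subseteq V$ via arcs $\{(u,v):u\in T_v\}$. $\mathrm{BAL}(\mu,\nu)$ for integer constants $\mu\ge\nu\ge2$: instance = directed graph $G=(V,E)$, probability functions $p_1,\dots,p_\mu:E\to[0,1]$, seed sets $\mathcal I=(I_1,\dots,I_\mu)$, budget $k\ge2$. Let $\hat V=V\times[\mu]$; a set $\mathcal S\subseteq\hat V$ is identified with $(S_1,\dots,S_\mu)$, $S_i=\{v:(v,i)\in\mathcal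 S\}$. An outcome profile $\mathcal X=(X_1,\dots,X_\mu)$ consists of outcomes $X_i$ w.r.t. $p_i$ (independent in the heterogeneous setting; in the correlated setting all $p_i$ are equal and $X_1=\dots=X_\mu$). Campaign $i$ reaches $v$ from seeds $A_i$ if $v\in\rho_{X_i}(A_i)$. $V^j_{\mathcal X}$ is the set of nodes reached by exactly $j$ campaigns from seeds $\mathcal I$. For $\ell\ge0$, $\Phi^{\ge\ell}(\mathcal S)$ is the expected number (over $\mathcal X$) of nodes $v\notin\bigcup_{j<\ell}V^j_{\mathcal X}$ reached by none or by at least $\nu$ campaigns from seeds $(I_i\cup S_i)_i$. *)

theory Defs
  imports Complex_Main "HOL-Library.FuncSet"
begin

definition innbrs :: "('a \<times> 'a) set \<Rightarrow> 'a \<Rightarrow> 'a set" where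
  "innbrs E v = {u. (u, v) \<in> E}"

definition outcomes :: "'a set \<Rightarrow> ('a \<times> 'a) set \<Rightarrow> ('a \<Rightarrow> 'a set) set" where
  "outcomes V E = (\<Pi>\<^sub>E v\<in>V. Pow (innbrs E v))"

definition outcome_prob :: "'a set \<Rightarrow> ('a \<times> 'a) set \<Rightarrow> ('a \<times> 'a \<Rightarrow> real) \<Rightarrow> ('a \<Rightarrow> 'a set) \<Rightarrow> real" where
  "outcome_prob V E q T =
     (\<Prod>v\<in>V. (\<Prod>u\<in>T v. q (u, v)) * (\<Prod>u\<in>innbrs E v - T v. 1 - q (u, v)))"

definition live_arcs :: "'a set \<Rightarrow> ('a \<Rightarrow> 'a set) \<Rightarrow> ('a \<times> 'a) set" where
  "live_arcs V T = {(u, w). w \<in> V \<and> u \<in> T w}"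

definition reach :: "'a set \<Rightarrow> ('a \<Rightarrow> 'a set) \<Rightarrow> 'a set \<Rightarrow> 'a set" where
  "reach V T A = {w. \<exists>a\<in>A. (a, w) \<in> (live_arcs V T)\<^sup>*}"

definition nreach :: "'a set \<Rightarrow> nat \<Rightarrow> (nat \<Rightarrow> 'a \<Rightarrow> 'a set) \<Rightarrow> (nat \<Rightarrow> 'a set) \<Rightarrow> 'a \<Rightarrow> nat" where
  "nreach V mu Xs A v = card {i\<in>{1..mu}. v \<in> reach V (Xs i) (A i)}"

definition Vj :: "'a set \<Rightarrow> nat \<Rightarrow> (nat \<Rightarrow> 'a \<Rightarrow> 'a set) \<Rightarrow> (nat \<Rightarrow> 'a set) \<Rightarrow> nat \<Rightarrow> 'a set" where
  "Vj V mu Xs I j = {v\<in>V. nreach V mu Xs I v = j}"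

definition Vhat :: "'a set \<Rightarrow> nat \<Rightarrow> ('a \<times> nat) set" where
  "Vhat V mu = V \<times> {1..mu}"

definition slice :: "('a \<times> nat) set \<Rightarrow> nat \<Rightarrow> 'a set" where
  "slice S i = {v. (v, i) \<in> S}"

definition phi_outcome ::
  "'a set \<Rightarrow> nat \<Rightarrow> nat \<Rightarrow> (nat \<Rightarrow> 'a set) \<Rightarrow> nat \<Rightarrow> ('a \<times> nat) set \<Rightarrow> (nat \<Rightarrow> 'a \<Rightarrow> 'a set) \<Rightarrow> nat" where
  "phi_outcome V mu nu I l S Xs =
     card {v\<in>V. v \<notin> (\<Union>j\<in>{..<l}. Vj V mu Xs I j) \<and>
                 (nreach V mu Xs (\<lambda>i. I i \<union> slice S i) v = 0 \<or>
                  nreach V mu Xs (\<lambda>i. I i \<union> slice S i) v \<ge> nu)}"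

text \<open>Heterogeneous setting (corr = False): independent
  outcomes X_i w.r.t. p_i. Correlated setting (corr = True): one outcome X w.r.t. p_1 shared
  by all campaigns (in that setting all p_i are assumed equal).\<close>
definition expect_profile ::
  "bool \<Rightarrow> 'a set \<Rightarrow> ('a \<times> 'a) set \<Rightarrow> nat \<Rightarrow> (nat \<Rightarrow> 'a \<times> 'a \<Rightarrow> real) \<Rightarrow>
   ((nat \<Rightarrow> 'a \<Rightarrow> 'a set) \<Rightarrow> real) \<Rightarrow> real" where
  "expect_profile corr V E mu p f =
     (if corr then
        (\<Sum>X\<in>outcomes V E. outcome_prob V E (p 1) X * f (\<lambda>i. X))
      else
        (\<Sum>Xs\<in>(\<Pi>\<^sub>E i\<in>{1..mu}. outcomes V E).
            (\<Prod>i\<in>{1..mu}. outcome_prob V E (p i) (Xs i)) * f Xs))"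

definition Phi_ge ::
  "bool \<Rightarrow> 'a set \<Rightarrow> ('a \<times> 'a) set \<Rightarrow> nat \<Rightarrow> nat \<Rightarrow> (nat \<Rightarrow> 'a \<times> 'a \<Rightarrow> real) \<Rightarrow>
   (nat \<Rightarrow> 'a set) \<Rightarrow> nat \<Rightarrow> ('a \<times> nat) set \<Rightarrow> real" where
  "Phi_ge corr V E mu nu p I l S =
     expect_profile corr V E mu p (\<lambda>Xs. real (phi_outcome V mu nu I l S Xs))"

definition BAL_instance ::
  "bool \<Rightarrow> nat \<Rightarrow> nat \<Rightarrow> 'a set \<Rightarrow> ('a \<times> 'a) set \<Rightarrow> (nat \<Rightarrow> 'a \<times> 'a \<Rightarrow> real) \<Rightarrow>
   (nat \<Rightarrow> 'a set) \<Rightarrow> nat \<Rightarrow> bool" where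
  "BAL_instance corr mu nu V E p I k \<longleftrightarrow>
     2 \<le> nu \<and> nu \<le> mu \<and> 2 \<le> k \<and> finite V \<and> E \<subseteq> V \<times> V \<and>
     (\<forall>i\<in>{1..mu}. \<forall>e\<in>E. 0 \<le> p i e \<and> p i e \<le> 1) \<and>
     (\<forall>i\<in>{1..mu}. I i \<subseteq> V) \<and>
     (corr \<longrightarrow> (\<forall>i\<in>{1..mu}. \<forall>e\<in>E. p i e = p 1 e))"

end

theory Submission
  imports Defs
begin

lemma prob_nonneg:
  assumes q: "\<forall>e\<in>E. 0 \<le> q e \<and> q e \<le> 1" and T: "T \<in> outcomes V E"
  shows "0 \<le> outcome_prob V E q T"
  unfolding outcome_prob_def
proof (rule prod_nonneg, rule mult_nonneg_nonneg)
  fix v assume v: "v \<in> V"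
  have sub: "T v \<subseteq> innbrs E v" using T v unfolding outcomes_def by auto
  show "0 \<le> (\<Prod>u\<in>T v. q (u, v))"
    by (rule prod_nonneg) (use sub q in \<open>auto simp: innbrs_def\<close>)
  show "0 \<le> (\<Prod>u\<in>innbrs E v - T v. 1 - q (u, v))"
    by (rule prod_nonneg) (use q in \<open>auto simp: innbrs_def\<close>)
qed

lemma exp_mono:
  assumes p: "\<forall>i\<in>{1..mu}. \<forall>e\<in>E. 0 \<le> p i e \<and> p i e \<le> 1" and mu: "1 \<le> mu"
    and fg: "\<And>Xs. f Xs \<le> g Xs"
  shows "expect_profile corr V E mu p f \<le> expect_profile corr V E mu p g"
proof (cases corr)
  case True
  have p1: "\<forall>e\<in>E. 0 \<le> p 1 e \<and> p 1 e \<le> 1" using p mu by auto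
  show ?thesis unfolding expect_profile_def if_P[OF True]
    by (rule sum_mono, rule mult_left_mono, rule fg, rule prob_nonneg[OF p1])
next
  case False
  show ?thesis using False unfolding expect_profile_def
    by (auto intro!: sum_mono mult_left_mono fg prod_nonneg prob_nonneg simp: PiE_iff p)
qed

lemma exp_diff:
  "expect_profile corr V E mu p (\<lambda>x. f x - g x) = expect_profile corr V E mu p f - expect_profile corr V E mu p g"
  unfolding expect_profile_def by (simp add: right_diff_distrib sum_subtractf)

lemma exp_sum:
  "expect_profile corr V E mu p (\<lambda>x. \<Sum>t\<in>T. f t x) = (\<Sum>t\<in>T. expect_profile corr V E mu p (f t))"
  unfolding expect_profile_def by (simp add: sum_distrib_left sum.swap[of _ T])

definition Cset where
  "Cset V mu nu I l S Xs = {v\<in>V. v \<notin> (\<Union>j\<in>{..<l}. Vj V mu Xs I j) \<and>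
                 (nreach V mu Xs (\<lambda>i. I i \<union> slice S i) v = 0 \<or>
                  nreach V mu Xs (\<lambda>i. I i \<union> slice S i) v \<ge> nu)}"

lemma phi_Cset: "phi_outcome V mu nu I l S Xs = card (Cset V mu nu I l S Xs)"
  unfolding phi_outcome_def Cset_def by simp

lemma reach_mono: "A \<subseteq> B \<Longrightarrow> reach V T A \<subseteq> reach V T B"
  unfolding reach_def by auto

lemma nreach_mono: "(\<And>i. A i \<subseteq> B i) \<Longrightarrow> nreach V mu Xs A v \<le> nreach V mu Xs B v"
  unfolding nreach_def by (rule card_mono) (auto intro: reach_mono[THEN subsetD])

lemma C_char:
  assumes "1 \<le> l"
  shows "v \<in> Cset V mu nu I l S Xs \<longleftrightarrow> v \<in> V \<and> l \<le> nreach V mu Xs I v \<and>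
     nu \<le> nreach V mu Xs (\<lambda>i. I i \<union> slice S i) v"
proof -
  have le: "nreach V mu Xs I v \<le> nreach V mu Xs (\<lambda>i. I i \<union> slice S i) v"
    by (rule nreach_mono) auto
  have "v \<in> V \<Longrightarrow> v \<notin> (\<Union>j\<in>{..<l}. Vj V mu Xs I j) \<longleftrightarrow> l \<le> nreach V mu Xs I v"
    unfolding Vj_def by auto
  then show ?thesis using le assms unfolding Cset_def by auto
qed

lemma C_mono:
  assumes "1 \<le> l" "S \<subseteq> S'"
  shows "Cset V mu nu I l S Xs \<subseteq> Cset V mu nu I l S' Xs"
proof
  fix v assume "v \<in> Cset V mu nu I l S Xs"
  moreover have "nreach V mu Xs (\<lambda>i. I i \<union> slice S i) v \<le> nreach V mu Xs (\<lambda>i. I i \<union> slice S' i) v"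
    by (rule nreach_mono) (use assms in \<open>auto simp: slice_def\<close>)
  ultimately show "v \<in> Cset V mu nu I l S' Xs" unfolding C_char[OF assms(1)] by linarith
qed

lemma key:
  assumes l: "1 \<le> l" and fin: "finite So" and cardSo: "nu - l \<le> card So"
    and v: "v \<in> Cset V mu nu I l So Xs"
  shows "\<exists>\<tau>. \<tau> \<subseteq> So \<and> card \<tau> = nu - l \<and> v \<in> Cset V mu nu I l (S \<union> \<tau>) Xs"
proof -
  define R0 where "R0 = {i\<in>{1..mu}. v \<in> reach V (Xs i) (I i)}"
  define R where "R = {i\<in>{1..mu}. v \<in> reach V (Xs i) (I i \<union> slice So i)}"
  have vc: "v \<in> V \<and> l \<le> nreach V mu Xs I v \<and> nu \<le> nreach V mu Xs (\<lambda>i. I i \<union> slice So i) v"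
    using v by (simp add: C_char[OF l])
  have vV: "v \<in> V" and cR0: "l \<le> card R0" and cR: "nu \<le> card R"
    using vc unfolding R0_def R_def nreach_def by auto
  have finR: "finite R" "finite R0" unfolding R_def R0_def by auto
  have R0R: "R0 \<subseteq> R" unfolding R0_def R_def unfolding reach_def by blast
  define m where "m = min (nu - l) (card (R - R0))"
  have "m \<le> card (R - R0)" unfolding m_def by simp
  then obtain R' where R': "R' \<subseteq> R - R0" "card R' = m" "finite R'"
    by (rule obtain_subset_with_card_n)
  have "\<forall>i\<in>R'. \<exists>a. (a, i) \<in> So \<and> (a, v) \<in> (live_arcs V (Xs i))\<^sup>*"
  proof
    fix i assume "i \<in> R'"
    then have "i \<in> R" "i \<notin> R0" "i \<in> {1..mu}" using R' unfolding R_def by auto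
    then show "\<exists>a. (a, i) \<in> So \<and> (a, v) \<in> (live_arcs V (Xs i))\<^sup>*"
      unfolding R_def R0_def reach_def slice_def by auto
  qed
  then obtain g where g: "\<forall>i\<in>R'. (g i, i) \<in> So \<and> (g i, v) \<in> (live_arcs V (Xs i))\<^sup>*"
    by (rule bchoice[THEN exE]) blast
  define t0 where "t0 = (\<lambda>i. (g i, i)) ` R'"
  have finR': "finite R'" using R' finR finite_subset by blast
  have ct0: "card t0 = m" unfolding t0_def using R'
    by (subst card_image) (auto simp: inj_on_def)
  have t0So: "t0 \<subseteq> So" using g unfolding t0_def by auto
  have m_le: "m \<le> nu - l" unfolding m_def by simp
  have "card (So - t0) = card So - m" using t0So fin ct0 by (simp add: card_Diff_subset finite_subset)
  then have "nu - l - m \<le> card (So - t0)" using cardSo by simp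
  then obtain X where X: "X \<subseteq> So - t0" "card X = nu - l - m" "finite X"
    by (rule obtain_subset_with_card_n)
  define \<tau> where "\<tau> = t0 \<union> X"
  have fint0: "finite t0" using t0So fin finite_subset by blast
  have finX: "finite X" using X fin finite_subset by blast
  have ctau: "card \<tau> = nu - l" unfolding \<tau>_def using X ct0 m_le fint0 finX
    by (subst card_Un_disjoint) auto
  have tauSo: "\<tau> \<subseteq> So" unfolding \<tau>_def using t0So X by auto
  define R'' where "R'' = {i\<in>{1..mu}. v \<in> reach V (Xs i) (I i \<union> slice (S \<union> \<tau>) i)}"
  have sub: "R0 \<union> R' \<subseteq> R''"
  proof
    fix i assume i: "i \<in> R0 \<union> R'"
    show "i \<in> R''"
    proof (cases "i \<in> R0")
      case True
      then show ?thesis unfolding R0_def R''_def reach_def by blast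
    next
      case False
      then have iR': "i \<in> R'" using i by auto
      then have "i \<in> {1..mu}" using R' unfolding R_def by auto
      moreover have "(g i, i) \<in> \<tau>" using iR' unfolding \<tau>_def t0_def by auto
      ultimately show ?thesis using g iR' unfolding R''_def reach_def slice_def by blast
    qed
  qed
  have "card (R0 \<union> R') = card R0 + card R'"
    using R' finR' finR by (subst card_Un_disjoint) auto
  also have "\<dots> \<ge> nu"
    using R' cR0 cR R0R finR card_Diff_subset[of R0 R] unfolding m_def by auto
  finally have "nu \<le> card (R0 \<union> R')" .
  moreover have "finite R''" unfolding R''_def by simp
  ultimately have "nu \<le> card R''" using card_mono[OF _ sub] by linarith
  then have "nu \<le> nreach V mu Xs (\<lambda>i. I i \<union> slice (S \<union> \<tau>) i) v"
    unfolding R''_def nreach_def .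
  then have "v \<in> Cset V mu nu I l (S \<union> \<tau>) Xs"
    using vc by (simp add: C_char[OF l])
  then show ?thesis using tauSo ctau by blast
qed

theorem mainTheorem5:
  fixes corr :: bool and mu nu k l :: nat and V :: "'a set" and E :: "('a \<times> 'a) set"
    and p :: "nat \<Rightarrow> 'a \<times> 'a \<Rightarrow> real" and I :: "nat \<Rightarrow> 'a set"
    and S tau_star S_opt :: "('a \<times> nat) set"
  assumes inst: "BAL_instance corr mu nu V E p I k"
    and l: "1 \<le> l" "l \<le> nu - 1"
    and S: "S \<subseteq> Vhat V mu" "card S \<le> k - (nu - l)"
    and tau_mem: "tau_star \<subseteq> Vhat V mu" "card tau_star = nu - l"
    and tau_max: "\<forall>tau. tau \<subseteq> Vhat V mu \<and> card tau = nu - l \<longrightarrow>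
                    Phi_ge corr V E mu nu p I l (S \<union> tau) \<le> Phi_ge corr V E mu nu p I l (S \<union> tau_star)"
    and opt_mem: "S_opt \<subseteq> Vhat V mu" "card S_opt = k"
    and opt_max: "\<forall>S'. S' \<subseteq> Vhat V mu \<and> card S' = k \<longrightarrow>
                    Phi_ge corr V E mu nu p I l S' \<le> Phi_ge corr V E mu nu p I l S_opt"
  shows "Phi_ge corr V E mu nu p I l (S \<union> tau_star) - Phi_ge corr V E mu nu p I l S
           \<ge> (Phi_ge corr V E mu nu p I l S_opt - Phi_ge corr V E mu nu p I l S) / real (k choose (nu - l))"
proof -
  have pb: "\<forall>i\<in>{1..mu}. \<forall>e\<in>E. 0 \<le> p i e \<and> p i e \<le> 1" and mu: "1 \<le> mu" and finV: "finite V"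
    and k2: "2 \<le> k"
    using inst unfolding BAL_instance_def by auto
  define F where "F = Phi_ge corr V E mu nu p I l"
  define f where "f = (\<lambda>S Xs. real (card (Cset V mu nu I l S Xs)))"
  have F_eq: "\<And>S. F S = expect_profile corr V E mu p (f S)"
    unfolding F_def f_def Phi_ge_def phi_Cset ..
  have finC: "\<And>S Xs. finite (Cset V mu nu I l S Xs)" using finV unfolding Cset_def by auto
  have fmono: "\<And>A B Xs. A \<subseteq> B \<Longrightarrow> f A Xs \<le> f B Xs"
    unfolding f_def by (simp add: card_mono[OF finC C_mono[OF l(1)]])
  have Fmono: "F S \<le> F (S \<union> tau_star)"
    unfolding F_eq by (rule exp_mono[OF pb mu]) (rule fmono, auto)
  show ?thesis
  proof (cases "nu - l \<le> k")
    case False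
    then show ?thesis using Fmono unfolding F_def by (simp add: binomial_eq_0)
  next
    case True
    have finSo: "finite S_opt" using opt_mem k2 card.infinite by fastforce
    define T where "T = {t. t \<subseteq> S_opt \<and> card t = nu - l}"
    have finT: "finite T" unfolding T_def using finSo by auto
    have cT: "card T = k choose (nu - l)" unfolding T_def using n_subsets[OF finSo] opt_mem by simp
    have pos: "0 < k choose (nu - l)" using True by simp
    have per: "f S_opt Xs - f S Xs \<le> (\<Sum>t\<in>T. f (S \<union> t) Xs - f S Xs)" for Xs
    proof -
      let ?C = "\<lambda>A. Cset V mu nu I l A Xs"
      have sub1: "?C S_opt - ?C S \<subseteq> (\<Union>t\<in>T. ?C (S \<union> t) - ?C S)"
      proof
        fix v assume v: "v \<in> ?C S_opt - ?C S"
        have cS: "nu - l \<le> card S_opt" using True opt_mem by simp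
        have vS: "v \<in> ?C S_opt" using v by blast
        obtain t where "t \<subseteq> S_opt" "card t = nu - l" "v \<in> ?C (S \<union> t)"
          using key[OF l(1) finSo cS vS, where S=S] by blast
        then show "v \<in> (\<Union>t\<in>T. ?C (S \<union> t) - ?C S)" using v unfolding T_def by blast
      qed
      have c1: "card (?C S_opt) \<le> card (?C S \<union> (?C S_opt - ?C S))"
        by (rule card_mono) (simp add: finC, blast)
      have c2: "card (?C S \<union> (?C S_opt - ?C S)) \<le> card (?C S) + card (?C S_opt - ?C S)"
        by (rule card_Un_le)
      have c3: "card (?C S_opt - ?C S) \<le> card (\<Union>t\<in>T. ?C (S \<union> t) - ?C S)"
        by (rule card_mono[OF _ sub1]) (simp add: finT finC)
      have c4: "card (\<Union>t\<in>T. ?C (S \<union> t) - ?C S) \<le> (\<Sum>t\<in>T. card (?C (S \<union> t) - ?C S))"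
        by (rule card_UN_le[OF finT])
      have c5: "card (?C S_opt) \<le> card (?C S) + (\<Sum>t\<in>T. card (?C (S \<union> t) - ?C S))"
        using c1 c2 c3 c4 by linarith
      have c6: "real (card (?C S_opt)) \<le> real (card (?C S) + (\<Sum>t\<in>T. card (?C (S \<union> t) - ?C S)))"
        using c5 by (simp only: of_nat_le_iff)
      then have "real (card (?C S_opt)) \<le> real (card (?C S)) + (\<Sum>t\<in>T. real (card (?C (S \<union> t) - ?C S)))"
        by (simp only: of_nat_add of_nat_sum)
      moreover have "real (card (?C (S \<union> t) - ?C S)) = f (S \<union> t) Xs - f S Xs" for t
      proof -
        have sb: "?C S \<subseteq> ?C (S \<union> t)" by (rule C_mono[OF l(1)]) blast
        show ?thesis unfolding f_def
          by (simp add: card_Diff_subset[OF finC sb] of_nat_diff card_mono[OF finC sb])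
      qed
      ultimately show ?thesis unfolding f_def by simp
    qed
    have "F S_opt - F S = expect_profile corr V E mu p (\<lambda>x. f S_opt x - f S x)"
      unfolding F_eq exp_diff ..
    also have "\<dots> \<le> expect_profile corr V E mu p (\<lambda>x. \<Sum>t\<in>T. f (S \<union> t) x - f S x)"
      by (rule exp_mono[OF pb mu per])
    also have "\<dots> = (\<Sum>t\<in>T. F (S \<union> t) - F S)"
      unfolding exp_sum F_eq exp_diff ..
    also have "\<dots> \<le> (\<Sum>t\<in>T. F (S \<union> tau_star) - F S)"
    proof (rule sum_mono)
      fix t assume "t \<in> T"
      then have "t \<subseteq> Vhat V mu" "card t = nu - l" using opt_mem unfolding T_def by auto
      then show "F (S \<union> t) - F S \<le> F (S \<union> tau_star) - F S" using tau_max unfolding F_def by auto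
    qed
    also have "\<dots> = real (k choose (nu - l)) * (F (S \<union> tau_star) - F S)" using cT by simp
    finally have fin: "F S_opt - F S \<le> real (k choose (nu - l)) * (F (S \<union> tau_star) - F S)" .
    then have fin2: "F S_opt - F S \<le> (F (S \<union> tau_star) - F S) * real (k choose (nu - l))"
      by (simp add: algebra_simps)
    have "(F S_opt - F S) / real (k choose (nu - l)) \<le> F (S \<union> tau_star) - F S"
      using pos fin2 by (simp add: pos_divide_le_eq)
    then show ?thesis unfolding F_def .
  qed
qed

end
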